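(* Let $a\in\mathbb{R}$, $\gamma\in[0,1]$, $f:\mathbb{N}_a\to\mathbb{R}$, and $\alpha_1,\alpha_2,\beta_1,\beta_2>0$. Then for all $t\in\mathbb{N}_a$, $$\Bigl({}_\gamma\diamondsuit_a^{-\alpha_1,-\beta_1}\bigl({}_\gamma\diamondsuit_a^{-\alpha_2,-\beta_2}f\bigr)\Bigr)(t)=\gamma\bigl({}_\gamma\diamondsuit_a^{-(\alpha_1+\alpha_2),-(\beta_1+\alpha_2)}f\bigr)(t)+(1-\gamma)\bigl({}_\gamma\diamondsuit_a^{-(\alpha_1+\beta_2),-(\beta_1+\beta_2)}f\bigr)(t).$$
   Context: $\mathbb{N}_a=\{a,a+1,a+2,\dots\}$, $\sigma(s)=s+1$, $\rho(s)=s-1$. Falling factorial $x^{(y)}:=\Gamma(x+1)/\Gamma(x+1-y)$; rising factorial $x^{\overline{y}}:=\Gamma(x+y)/\Gamma(x)$. For $g:\mathbb{N}_a\to\mathbb{R}$ and $\alpha>0$: $(\Delta_a^{-\alpha}g)(t+\alpha)=\frac{1}{\Gamma(\alpha)}\sum_{s=a}^{t}(t+\alpha-\sigma(s))^{(\alpha-1)}g(s)$ and $(\nabla_a^{-\beta}g)(t)=\frac{1}{\Gamma(\beta)}\sum_{s=a}^{t}(t-\rho(s))^{\overline{\beta-1}}g(s)$, $t\in\mathbb{N}_a$. The diamond-$\gamma$ fractional operator of order $(\alpha,\beta)$ is $({}_\gamma\diamondsuit_a^{-\alpha,-\beta}g)(t)=\gamma(\Delta_a^{-\alpha}g)(t+\alpha)+(1-\gamma)(\nabla_a^{-\beta}g)(t)$,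 a function on $\mathbb{N}_a$. *)

theory Defs
  imports "HOL-Analysis.Analysis"
begin

definition falling_fact :: "real \<Rightarrow> real \<Rightarrow> real" where
  "falling_fact x y = Gamma (x + 1) / Gamma (x + 1 - y)"

definition rising_fact :: "real \<Rightarrow> real \<Rightarrow> real" where
  "rising_fact x y = Gamma (x + y) / Gamma x"

text \<open>Functions on N_a are represented as real functions; only values at a + k (k natural) matter.
  The sum over s in N_a with s \<le> t is the sum over s = a + k, k natural, a + k \<le> t.\<close>

text \<open>delta_frac_sum a alpha g t denotes (Delta_a^{-alpha} g)(t + alpha).\<close>
definition delta_frac_sum :: "real \<Rightarrow> real \<Rightarrow> (real \<Rightarrow> real) \<Rightarrow> real \<Rightarrow> real" where
  "delta_frac_sum a \<alpha> g t =
     (1 / Gamma \<alpha>) * (\<Sum>k\<in>{k::nat. a + real k \<le> t}.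
        falling_fact (t + \<alpha> - ((a + real k) + 1)) (\<alpha> - 1) * g (a + real k))"

text \<open>nabla_frac_sum a beta g t denotes (nabla_a^{-beta} g)(t).\<close>
definition nabla_frac_sum :: "real \<Rightarrow> real \<Rightarrow> (real \<Rightarrow> real) \<Rightarrow> real \<Rightarrow> real" where
  "nabla_frac_sum a \<beta> g t =
     (1 / Gamma \<beta>) * (\<Sum>k\<in>{k::nat. a + real k \<le> t}.
        rising_fact (t - ((a + real k) - 1)) (\<beta> - 1) * g (a + real k))"

definition diamond_frac :: "real \<Rightarrow> real \<Rightarrow> real \<Rightarrow> real \<Rightarrow> (real \<Rightarrow> real) \<Rightarrow> real \<Rightarrow> real" where
  "diamond_frac a \<gamma> \<alpha> \<beta> g t =
     \<gamma> * delta_frac_sum a \<alpha> g t + (1 - \<gamma>) * nabla_frac_sum a \<beta> g t"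

end

theory Submission imports Defs begin

definition w :: "real \<Rightarrow> nat \<Rightarrow> real" where "w \<alpha> m = pochhammer \<alpha> m / fact m"

lemma Gamma_w: assumes "\<alpha> > 0" shows "Gamma (real m + \<alpha>) / (Gamma \<alpha> * Gamma (real m + 1)) = w \<alpha> m"
proof -
  have "\<alpha> \<notin> \<int>\<^sub>\<le>\<^sub>0" using assms nonpos_Ints_nonpos by force
  hence "Gamma (\<alpha> + real m) = pochhammer \<alpha> m * Gamma \<alpha>"
    using pochhammer_Gamma[of \<alpha> m] Gamma_nonzero[of \<alpha>] by (simp add: field_simps)
  moreover have "Gamma (real m + 1) = fact m" using Gamma_fact[of m] by (simp add: add.commute)
  moreover have "Gamma \<alpha> > 0" using assms by (simp add: Gamma_real_pos)
  ultimately show ?thesis unfolding w_def by (simp add: add.commute field_simps)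
qed

lemma setn: "{k::nat. a + real k \<le> a + real n} = {..n}" by auto

lemma delta_eq: assumes "\<alpha> > 0"
  shows "delta_frac_sum a \<alpha> g (a + real n) = (\<Sum>k\<le>n. w \<alpha> (n-k) * g (a + real k))"
  unfolding delta_frac_sum_def setn sum_distrib_left
proof (rule sum.cong[OF refl])
  fix k assume "k \<in> {..n}"
  hence kn: "k \<le> n" by simp
  have e1: "a + real n + \<alpha> - (a + real k + 1) + 1 = real (n-k) + \<alpha>" using kn by (simp add: of_nat_diff)
  have e2: "a + real n + \<alpha> - (a + real k + 1) + 1 - (\<alpha> - 1) = real (n-k) + 1" using kn by (simp add: of_nat_diff)
  show "1 / Gamma \<alpha> * (falling_fact (a + real n + \<alpha> - (a + real k + 1)) (\<alpha> - 1) * g (a + real k)) =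
         w \<alpha> (n - k) * g (a + real k)"
    unfolding falling_fact_def e1 e2 Gamma_w[OF assms, of "n-k", symmetric] by simp
qed

lemma nabla_eq: assumes "\<beta> > 0"
  shows "nabla_frac_sum a \<beta> g (a + real n) = (\<Sum>k\<le>n. w \<beta> (n-k) * g (a + real k))"
  unfolding nabla_frac_sum_def setn sum_distrib_left
proof (rule sum.cong[OF refl])
  fix k assume "k \<in> {..n}"
  hence kn: "k \<le> n" by simp
  have e1: "a + real n - (a + real k - 1) + (\<beta> - 1) = real (n-k) + \<beta>" using kn by (simp add: of_nat_diff)
  have e2: "a + real n - (a + real k - 1) = real (n-k) + 1" using kn by (simp add: of_nat_diff)
  show "1 / Gamma \<beta> * (rising_fact (a + real n - (a + real k - 1)) (\<beta> - 1) * g (a + real k)) =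
         w \<beta> (n - k) * g (a + real k)"
    unfolding rising_fact_def e1 e2 Gamma_w[OF assms, of "n-k", symmetric] by simp
qed

lemma diamond_eq: assumes "\<alpha> > 0" "\<beta> > 0"
  shows "diamond_frac a \<gamma> \<alpha> \<beta> g (a + real n) = (\<Sum>k\<le>n. (\<gamma> * w \<alpha> (n-k) + (1-\<gamma>) * w \<beta> (n-k)) * g (a + real k))"
  unfolding diamond_frac_def delta_eq[OF assms(1)] nabla_eq[OF assms(2)]
  by (simp add: sum_distrib_left sum.distrib[symmetric] algebra_simps)

lemma w_conv: "(\<Sum>i\<le>m. w \<alpha> (m-i) * w \<beta> i) = w (\<alpha>+\<beta>) m"
proof -
  have "w (\<alpha>+\<beta>) m = (\<Sum>k\<le>m. of_nat (m choose k) * pochhammer \<beta> k * pochhammer \<alpha> (m - k)) / fact m"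
    unfolding w_def using pochhammer_binomial_sum[of \<beta> \<alpha> m] by (simp add: add.commute)
  also have "\<dots> = (\<Sum>k\<le>m. w \<alpha> (m-k) * w \<beta> k)"
    unfolding sum_divide_distrib
  proof (rule sum.cong[OF refl])
    fix k assume "k \<in> {..m}" hence "k \<le> m" by simp
    thus "of_nat (m choose k) * pochhammer \<beta> k * pochhammer \<alpha> (m - k) / fact m = w \<alpha> (m - k) * w \<beta> k"
      unfolding w_def binomial_fact[OF \<open>k \<le> m\<close>] by (simp add: field_simps)
  qed
  finally show ?thesis ..
qed

lemma swap_tri: fixes n :: nat shows "(\<Sum>k\<le>n. \<Sum>j\<le>k. F k j) = (\<Sum>j\<le>n. \<Sum>k\<in>{j..n}. (F k j :: real))"
proof (induction n)
  case 0 then show ?case by simp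
next
  case (Suc n)
  have "(\<Sum>j\<le>Suc n. \<Sum>k\<in>{j..Suc n}. F k j) = (\<Sum>j\<le>n. \<Sum>k\<in>{j..Suc n}. F k j) + F (Suc n) (Suc n)" by simp
  also have "(\<Sum>j\<le>n. \<Sum>k\<in>{j..Suc n}. F k j) = (\<Sum>j\<le>n. (\<Sum>k\<in>{j..n}. F k j) + F (Suc n) j)"
    by (rule sum.cong[OF refl]) simp
  finally show ?case using Suc by (simp add: sum.distrib)
qed

lemma conv_assoc: fixes n :: nat shows "(\<Sum>k\<le>n. c (n-k) * (\<Sum>j\<le>k. d (k-j) * g j)) = (\<Sum>j\<le>n. (\<Sum>i\<le>n-j. c (n-j-i) * d i) * (g j :: real))"
proof -
  have "(\<Sum>k\<le>n. c (n-k) * (\<Sum>j\<le>k. d (k-j) * g j)) = (\<Sum>k\<le>n. \<Sum>j\<le>k. c (n-k) * d (k-j) * g j)"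
    by (simp add: sum_distrib_left mult.assoc)
  also have "\<dots> = (\<Sum>j\<le>n. \<Sum>k\<in>{j..n}. c (n-k) * d (k-j) * g j)" by (rule swap_tri)
  also have "\<dots> = (\<Sum>j\<le>n. (\<Sum>i\<le>n-j. c (n-j-i) * d i) * g j)"
  proof (rule sum.cong[OF refl])
    fix j assume "j \<in> {..n}" hence jn: "j \<le> n" by simp
    have "(\<Sum>k\<in>{j..n}. c (n-k) * d (k-j) * g j) = (\<Sum>i\<in>{0..n-j}. c (n-(i+j)) * d (i+j-j) * g j)"
      using sum.shift_bounds_cl_nat_ivl[of "\<lambda>k. c (n-k) * d (k-j) * g j" 0 j "n-j"] jn by simp
    also have "\<dots> = (\<Sum>i\<le>n-j. c (n-j-i) * d i) * g j"
      by (simp add: sum_distrib_right atLeast0AtMost diff_diff_left add.commute)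
    finally show "(\<Sum>k\<in>{j..n}. c (n-k) * d (k-j) * g j) = (\<Sum>i\<le>n-j. c (n-j-i) * d i) * g j" .
  qed
  finally show ?thesis .
qed

lemma coeff_eq: "(\<Sum>i\<le>m. (\<gamma> * w \<alpha>1 (m-i) + (1-\<gamma>) * w \<beta>1 (m-i)) * (\<gamma> * w \<alpha>2 i + (1-\<gamma>) * w \<beta>2 i))
  = \<gamma> * (\<gamma> * w (\<alpha>1+\<alpha>2) m + (1-\<gamma>) * w (\<beta>1+\<alpha>2) m) + (1-\<gamma>) * (\<gamma> * w (\<alpha>1+\<beta>2) m + (1-\<gamma>) * w (\<beta>1+\<beta>2) m)"
proof -
  have "(\<Sum>i\<le>m. (\<gamma> * w \<alpha>1 (m-i) + (1-\<gamma>) * w \<beta>1 (m-i)) * (\<gamma> * w \<alpha>2 i + (1-\<gamma>) * w \<beta>2 i))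
    = (\<Sum>i\<le>m. \<gamma>*\<gamma> * (w \<alpha>1 (m-i) * w \<alpha>2 i) + \<gamma>*(1-\<gamma>) * (w \<alpha>1 (m-i) * w \<beta>2 i)
        + (1-\<gamma>)*\<gamma> * (w \<beta>1 (m-i) * w \<alpha>2 i) + (1-\<gamma>)*(1-\<gamma>) * (w \<beta>1 (m-i) * w \<beta>2 i))"
    by (rule sum.cong[OF refl]) (simp add: algebra_simps)
  also have "\<dots> = \<gamma>*\<gamma> * w (\<alpha>1+\<alpha>2) m + \<gamma>*(1-\<gamma>) * w (\<alpha>1+\<beta>2) m
        + (1-\<gamma>)*\<gamma> * w (\<beta>1+\<alpha>2) m + (1-\<gamma>)*(1-\<gamma>) * w (\<beta>1+\<beta>2) m"
    by (simp only: sum.distrib sum_distrib_left[symmetric] w_conv)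
  finally show ?thesis by (simp add: algebra_simps)
qed

theorem mainTheorem14:
  fixes a \<gamma> \<alpha>1 \<alpha>2 \<beta>1 \<beta>2 :: real and f :: "real \<Rightarrow> real"
  assumes "0 \<le> \<gamma>" "\<gamma> \<le> 1"
    and "\<alpha>1 > 0" "\<alpha>2 > 0" "\<beta>1 > 0" "\<beta>2 > 0"
  shows "\<forall>n::nat. diamond_frac a \<gamma> \<alpha>1 \<beta>1 (diamond_frac a \<gamma> \<alpha>2 \<beta>2 f) (a + real n) =
           \<gamma> * diamond_frac a \<gamma> (\<alpha>1 + \<alpha>2) (\<beta>1 + \<alpha>2) f (a + real n)
           + (1 - \<gamma>) * diamond_frac a \<gamma> (\<alpha>1 + \<beta>2) (\<beta>1 + \<beta>2) f (a + real n)"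
proof
  fix n :: nat
  define C1 where "C1 = (\<lambda>m. \<gamma> * w \<alpha>1 m + (1-\<gamma>) * w \<beta>1 m)"
  define C2 where "C2 = (\<lambda>m. \<gamma> * w \<alpha>2 m + (1-\<gamma>) * w \<beta>2 m)"
  have "diamond_frac a \<gamma> \<alpha>1 \<beta>1 (diamond_frac a \<gamma> \<alpha>2 \<beta>2 f) (a + real n)
      = (\<Sum>k\<le>n. C1 (n-k) * (\<Sum>j\<le>k. C2 (k-j) * f (a + real j)))"
    unfolding diamond_eq[OF assms(3,5)] diamond_eq[OF assms(4,6)] C1_def C2_def ..
  also have "\<dots> = (\<Sum>j\<le>n. (\<Sum>i\<le>n-j. C1 (n-j-i) * C2 i) * f (a + real j))"
    by (rule conv_assoc)
  also have "\<dots> = (\<Sum>j\<le>n. (\<gamma> * (\<gamma> * w (\<alpha>1+\<alpha>2) (n-j) + (1-\<gamma>) * w (\<beta>1+\<alpha>2) (n-j))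
       + (1-\<gamma>) * (\<gamma> * w (\<alpha>1+\<beta>2) (n-j) + (1-\<gamma>) * w (\<beta>1+\<beta>2) (n-j))) * f (a + real j))"
    unfolding C1_def C2_def coeff_eq ..
  also have "\<dots> = \<gamma> * diamond_frac a \<gamma> (\<alpha>1 + \<alpha>2) (\<beta>1 + \<alpha>2) f (a + real n)
           + (1 - \<gamma>) * diamond_frac a \<gamma> (\<alpha>1 + \<beta>2) (\<beta>1 + \<beta>2) f (a + real n)"
    using assms
    by (simp add: diamond_eq sum_distrib_left sum.distrib[symmetric] algebra_simps)
  finally show "diamond_frac a \<gamma> \<alpha>1 \<beta>1 (diamond_frac a \<gamma> \<alpha>2 \<beta>2 f) (a + real n) =
           \<gamma> * diamond_frac a \<gamma> (\<alpha>1 + \<alpha>2) (\<beta>1 + \<alpha>2) f (a + real n)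
           + (1 - \<gamma>) * diamond_frac a \<gamma> (\<alpha>1 + \<beta>2) (\<beta>1 + \<beta>2) f (a + real n)" .
qed

end
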